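(* Let $(R,\mathfrak{m})$ be a Noetherian local ring of prime characteristic $p>0$ and $I$ an ideal of $R$. Then $$0^{F_R}_{H^0_{\mathfrak{m}}(R/I)}=\big(I^F\cap (I:_R\mathfrak{m}^{\infty})\big)/I.$$
   Context: For an ideal $K$ of $R$ and $e\ge0$, $K^{[p^e]}=(x^{p^e}\mid x\in K)$, and $I^F=\{x\in R\mid x^{p^e}\in I^{[p^e]}\text{ for some }e\ge0\}$ is the Frobenius closure. The map $F^e_R:R/K\to R/K^{[p^e]}$, $a+K\mapsto a^{p^e}+K^{[p^e]}$, induces (via Čech complexes) the relative Frobenius maps $F^e_R:H^i_{\mathfrak{m}}(R/K)\to H^i_{\mathfrak{m}}(R/K^{[p^e]})$. The relative Frobenius closure of zero is $0^{F_R}_{H^i_{\mathfrak{m}}(R/K)}=\{\eta\in H^i_{\mathfrak{m}}(R/K)\mid F^e_R(\eta)=0\in H^i_{\mathfrak{m}}(R/K^{[p^e]})\text{ for some }e\ge0\}$. Here $H^0_{\mathfrak{m}}(R/I)$ is identified with $(I:_R\mathfrak{m}^\infty)/I$. *)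

theory Defs
  imports "HOL-Algebra.Ideal_Product" "HOL-Algebra.Ring_Divisibility" "HOL-Algebra.QuotRing" "HOL-Computational_Algebra.Primes"
begin

definition local_ring :: "('a, 'b) ring_scheme \<Rightarrow> 'a set \<Rightarrow> bool" where
  "local_ring R m \<longleftrightarrow> cring R \<and> maximalideal m R \<and> (\<forall>J. maximalideal J R \<longrightarrow> J = m)"

definition has_prime_char :: "('a, 'b) ring_scheme \<Rightarrow> nat \<Rightarrow> bool" where
  "has_prime_char R p \<longleftrightarrow> normalization_semidom_class.prime p \<and> \<one>\<^bsub>R\<^esub> \<noteq> \<zero>\<^bsub>R\<^esub> \<and> add_pow R p \<one>\<^bsub>R\<^esub> = \<zero>\<^bsub>R\<^esub>"

definition frob_pow :: "('a, 'b) ring_scheme \<Rightarrow> nat \<Rightarrow> nat \<Rightarrow> 'a set \<Rightarrow> 'a set" where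
  "frob_pow R p e K = Idl\<^bsub>R\<^esub> {x [^]\<^bsub>R\<^esub> (p ^ e) | x. x \<in> K}"

definition frob_closure :: "('a, 'b) ring_scheme \<Rightarrow> nat \<Rightarrow> 'a set \<Rightarrow> 'a set" where
  "frob_closure R p I = {x \<in> carrier R. \<exists>e. x [^]\<^bsub>R\<^esub> (p ^ e) \<in> frob_pow R p e I}"

definition ideal_colon :: "('a, 'b) ring_scheme \<Rightarrow> 'a set \<Rightarrow> 'a set \<Rightarrow> 'a set" where
  "ideal_colon R I J = {x \<in> carrier R. \<forall>j \<in> J. x \<otimes>\<^bsub>R\<^esub> j \<in> I}"

definition saturation :: "('a, 'b) ring_scheme \<Rightarrow> 'a set \<Rightarrow> 'a set \<Rightarrow> 'a set" where
  "saturation R I m = (\<Union>n. ideal_colon R I (m [^]\<^bsub>ideals_set R\<^esub> (n::nat)))"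

text \<open>H^0_m(R/I), identified with (I :_R m^\<infinity>)/I, as a set of cosets a + I in R/I.\<close>
definition H0 :: "('a, 'b) ring_scheme \<Rightarrow> 'a set \<Rightarrow> 'a set \<Rightarrow> 'a set set" where
  "H0 R m I = {I +>\<^bsub>R\<^esub> a | a. a \<in> saturation R I m}"

text \<open>Relative Frobenius F^e_R : R/K \<rightarrow> R/K^[p^e], a + K \<mapsto> a^(p^e) + K^[p^e]
  (evaluated on a chosen representative; it is well defined).\<close>
definition rel_frob :: "('a, 'b) ring_scheme \<Rightarrow> nat \<Rightarrow> nat \<Rightarrow> 'a set \<Rightarrow> 'a set \<Rightarrow> 'a set" where
  "rel_frob R p e K \<eta> =
     frob_pow R p e K +>\<^bsub>R\<^esub> ((SOME a. a \<in> carrier R \<and> \<eta> = K +>\<^bsub>R\<^esub> a) [^]\<^bsub>R\<^esub> (p ^ e))"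

definition rel_frob_closure_zero_H0 :: "('a, 'b) ring_scheme \<Rightarrow> nat \<Rightarrow> 'a set \<Rightarrow> 'a set \<Rightarrow> 'a set set" where
  "rel_frob_closure_zero_H0 R p m K =
     {\<eta> \<in> H0 R m K. \<exists>e. rel_frob R p e K \<eta> = \<zero>\<^bsub>R Quot (frob_pow R p e K)\<^esub>}"

end

theory Submission
  imports Defs
begin

context cring begin

lemma binom:
  assumes x: "x \<in> carrier R" and y: "y \<in> carrier R"
  shows "(x \<oplus> y) [^] n = (\<Oplus>k\<in>{..n}. add_pow R (n choose k) (x [^] k \<otimes> y [^] (n - k)))"
proof (induction n)
  case 0
  then show ?case using x y by simp
next
  case (Suc n)
  define S where "S = (\<Oplus>k\<in>{..n}. add_pow R (n choose k) (x [^] k \<otimes> y [^] (n - k)))"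
  have Sx: "S \<otimes> x = (\<Oplus>k\<in>{..n}. add_pow R (n choose k) (x [^] Suc k \<otimes> y [^] (n - k)))"
    unfolding S_def
    apply (subst finsum_ldistr) using x y apply auto
    apply (rule finsum_cong') apply auto
    apply (subst add_pow_ldistr) apply auto
    by (metis m_assoc m_comm nat_pow_Suc nat_pow_closed)
  have Sy: "S \<otimes> y = (\<Oplus>k\<in>{..n}. add_pow R (n choose k) (x [^] k \<otimes> y [^] (Suc n - k)))"
    unfolding S_def
    apply (subst finsum_ldistr) using x y apply auto
    apply (rule finsum_cong') apply auto
    apply (subst add_pow_ldistr) apply auto
    by (metis Suc_diff_le m_assoc nat_pow_Suc nat_pow_closed)
  have "(x \<oplus> y) [^] Suc n = S \<otimes> x \<oplus> S \<otimes> y"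
    using Suc x y unfolding S_def by (simp add: r_distr)
  have A: "(\<Oplus>k\<in>{..Suc n}. add_pow R (Suc n choose k) (x [^] k \<otimes> y [^] (Suc n - k)))
     = (\<Oplus>k\<in>{..n}. add_pow R (Suc n choose Suc k) (x [^] Suc k \<otimes> y [^] (n - k))) \<oplus> y [^] Suc n"
    apply (subst finsum_Suc2) using x y by auto
  have B: "(\<Oplus>k\<in>{..n}. add_pow R (Suc n choose Suc k) (x [^] Suc k \<otimes> y [^] (n - k)))
     = S \<otimes> x \<oplus> (\<Oplus>k\<in>{..n}. add_pow R (n choose Suc k) (x [^] Suc k \<otimes> y [^] (n - k)))"
  proof -
    have "(\<Oplus>k\<in>{..n}. add_pow R (Suc n choose Suc k) (x [^] Suc k \<otimes> y [^] (n - k)))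
      = (\<Oplus>k\<in>{..n}. add_pow R (n choose k) (x [^] Suc k \<otimes> y [^] (n - k)) \<oplus> add_pow R (n choose Suc k) (x [^] Suc k \<otimes> y [^] (n - k)))"
      apply (rule finsum_cong') using x y by (auto simp: add.nat_pow_mult)
    also have "\<dots> = (\<Oplus>k\<in>{..n}. add_pow R (n choose k) (x [^] Suc k \<otimes> y [^] (n - k))) \<oplus> (\<Oplus>k\<in>{..n}. add_pow R (n choose Suc k) (x [^] Suc k \<otimes> y [^] (n - k)))"
      apply (rule finsum_addf) using x y by auto
    finally show ?thesis unfolding Sx .
  qed
  have C1: "(\<Oplus>k\<in>{..n}. add_pow R (n choose Suc k) (x [^] Suc k \<otimes> y [^] (n - k))) \<oplus> y [^] Suc n
      = (\<Oplus>k\<in>{..Suc n}. add_pow R (n choose k) (x [^] k \<otimes> y [^] (Suc n - k)))"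
    using finsum_Suc2[of "\<lambda>k. add_pow R (n choose k) (x [^] k \<otimes> y [^] (Suc n - k))" n] x y by auto
  have C2: "(\<Oplus>k\<in>{..Suc n}. add_pow R (n choose k) (x [^] k \<otimes> y [^] (Suc n - k))) = S \<otimes> y"
    unfolding Sy apply (subst finsum_Suc) using x y by (auto simp: binomial_eq_0)
  have cl: "S \<in> carrier R" "(\<Oplus>k\<in>{..n}. add_pow R (n choose Suc k) (x [^] Suc k \<otimes> y [^] (n - k))) \<in> carrier R"
    unfolding S_def using x y by (auto intro!: finsum_closed)
  show ?case
    using \<open>(x \<oplus> y) [^] Suc n = S \<otimes> x \<oplus> S \<otimes> y\<close> A B C1 C2 x y cl
    unfolding S_def[symmetric] by (simp add: a_assoc)
qed

lemma frob_add:
  assumes pr: "prime (p::nat)" and p1: "add_pow R p \<one> = \<zero>"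
    and x: "x \<in> carrier R" and y: "y \<in> carrier R"
  shows "(x \<oplus> y) [^] p = x [^] p \<oplus> y [^] p"
proof -
  have p2: "p \<ge> 2" using prime_ge_2_nat[OF pr] .
  define r where "r = p - 2"
  have pr2: "p = Suc (Suc r)" using p2 unfolding r_def by simp
  have z: "add_pow R p z = \<zero>" if "z \<in> carrier R" for z
  proof -
    have "add_pow R p z = add_pow R p (\<one> \<otimes> z)" using that by simp
    also have "\<dots> = add_pow R p \<one> \<otimes> z" using add_pow_ldistr[of \<one> z p] that by simp
    finally show ?thesis using p1 that by simp
  qed
  define f where "f = (\<lambda>k. add_pow R (p choose k) (x [^] k \<otimes> y [^] (p - k)))"
  have fc: "f \<in> A \<rightarrow> carrier R" for A unfolding f_def using x y by auto
  have mid: "f (Suc i) = \<zero>" if "i \<le> r" for i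
  proof -
    have "p dvd (p choose Suc i)"
      by (rule dvd_choose_prime) (use that pr pr2 in auto)
    then obtain c where c: "p choose Suc i = p * c" by blast
    have w: "x [^] Suc i \<otimes> y [^] (p - Suc i) \<in> carrier R" using x y by auto
    show ?thesis unfolding f_def c
      using add.nat_pow_pow[OF w, of c p, symmetric] z[OF w] by (simp add: mult.commute)
  qed
  have e1: "(x \<oplus> y) [^] p = finsum R f {..p}"
    unfolding f_def by (rule binom[OF x y])
  have e2: "finsum R f {..p} = f p \<oplus> (finsum R (\<lambda>i. f (Suc i)) {..r} \<oplus> f 0)"
  proof -
    have "finsum R f {..Suc (Suc r)} = f (Suc (Suc r)) \<oplus> finsum R f {..Suc r}"
      by (rule finsum_Suc[OF fc])
    moreover have "finsum R f {..Suc r} = finsum R (\<lambda>i. f (Suc i)) {..r} \<oplus> f 0"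
      by (rule finsum_Suc2[OF fc])
    ultimately show ?thesis by (simp only: pr2)
  qed
  have e3: "finsum R (\<lambda>i. f (Suc i)) {..r} = \<zero>"
  proof -
    have "finsum R (\<lambda>i. f (Suc i)) {..r} = finsum R (\<lambda>i. \<zero>) {..r}"
      by (rule finsum_cong') (auto simp: mid)
    then show ?thesis by simp
  qed
  have e4: "f p = x [^] p" unfolding f_def using x by simp
  have e5: "f 0 = y [^] p" unfolding f_def using y by simp
  show ?thesis using e1 e2 e3 e4 e5 x y by simp
qed

lemma frob_add_pow:
  assumes pr: "prime (p::nat)" and p1: "add_pow R p \<one> = \<zero>"
    and x: "x \<in> carrier R" and y: "y \<in> carrier R"
  shows "(x \<oplus> y) [^] (p ^ e) = x [^] (p ^ e) \<oplus> y [^] (p ^ e)"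
proof (induction e)
  case 0
  then show ?case using x y by simp
next
  case (Suc e)
  have c: "x \<oplus> y \<in> carrier R" using x y by simp
  have "(x \<oplus> y) [^] (p ^ Suc e) = ((x \<oplus> y) [^] (p ^ e)) [^] p"
    unfolding power_Suc2 by (rule nat_pow_pow[OF c, symmetric])
  also have "\<dots> = (x [^] (p ^ e)) [^] p \<oplus> (y [^] (p ^ e)) [^] p"
    unfolding Suc by (rule frob_add[OF pr p1]) (use x y in simp_all)
  also have "(x [^] (p ^ e)) [^] p = x [^] (p ^ Suc e)"
    unfolding power_Suc2 by (rule nat_pow_pow[OF x])
  also have "(y [^] (p ^ e)) [^] p = y [^] (p ^ Suc e)"
    unfolding power_Suc2 by (rule nat_pow_pow[OF y])
  finally show ?case .
qed

end

context cring begin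

lemma coset_zero_iff:
  assumes J: "ideal J R" and c: "c \<in> carrier R"
  shows "J +> c = J \<longleftrightarrow> c \<in> J"
proof
  assume "J +> c = J"
  then show "c \<in> J" by (rule ideal.rcos_const_imp_mem[OF J c])
next
  assume "c \<in> J"
  then show "J +> c = J" by (rule a_rcos_zero[OF J])
qed

lemma frob_pow_ideal: "I \<subseteq> carrier R \<Longrightarrow> ideal (frob_pow R p e I) R"
  unfolding frob_pow_def by (rule genideal_ideal) auto

lemma frob_pow_mem: "I \<subseteq> carrier R \<Longrightarrow> i \<in> I \<Longrightarrow> i [^] (p ^ e) \<in> frob_pow R p e I"
  unfolding frob_pow_def by (rule genideal_self[THEN subsetD]) auto

lemma ideal_pow_sub:
  assumes "ideal m R"
  shows "m [^]\<^bsub>ideals_set R\<^esub> (n::nat) \<subseteq> carrier R"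
proof -
  have mon: "monoid (ideals_set R)" using semiring.axioms(2)[OF ideals_set_is_semiring] .
  have cI: "carrier (ideals_set R) = {J. ideal J R}" by (simp add: ideals_set_def)
  have "m \<in> carrier (ideals_set R)" using assms by (simp add: cI)
  then have "m [^]\<^bsub>ideals_set R\<^esub> n \<in> carrier (ideals_set R)"
    by (rule monoid.nat_pow_closed[OF mon])
  then have "ideal (m [^]\<^bsub>ideals_set R\<^esub> n) R" by (simp add: cI)
  then show ?thesis by (rule additive_subgroup.a_subset[OF ideal.axioms(1)])
qed

lemma main:
  assumes pr: "prime (p::nat)" and p1: "add_pow R p \<one> = \<zero>"
    and I: "ideal I R" and mI: "ideal m R"
  shows "rel_frob_closure_zero_H0 R p m I
           = {I +> a | a. a \<in> frob_closure R p I \<inter> saturation R I m}"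
proof -
  have Ic: "I \<subseteq> carrier R" by (rule additive_subgroup.a_subset[OF ideal.axioms(1)[OF I]])
  have satc: "saturation R I m \<subseteq> carrier R"
    unfolding saturation_def ideal_colon_def by auto
  have rep: "(SOME b. b \<in> carrier R \<and> I +> a = I +> b) \<in> carrier R
      \<and> I +> a = I +> (SOME b. b \<in> carrier R \<and> I +> a = I +> b)" if "a \<in> carrier R" for a
    by (rule someI[of _ a]) (use that in auto)
  have diff: "b \<ominus> a \<in> I" if "a \<in> carrier R" "b \<in> carrier R" "I +> a = I +> b" for a b
    using quotient_eq_iff_same_a_r_cos[OF I that(2,1)] that(3) by simp
  have bsum: "b = a \<oplus> (b \<ominus> a)" if "a \<in> carrier R" "b \<in> carrier R" for a b
  proof -
    have "a \<oplus> (b \<ominus> a) = a \<oplus> (b \<oplus> \<ominus> a)" by (simp only: minus_eq)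
    also have "\<dots> = b \<oplus> (a \<oplus> \<ominus> a)" using that by (simp only: a_lcomm[of a b] a_inv_closed)
    also have "\<dots> = b" using that by (simp only: r_neg r_zero)
    finally show ?thesis by (rule sym)
  qed
  have zeroQ: "\<zero>\<^bsub>R Quot J\<^esub> = J" for J by (simp add: FactRing_def)
  have rf: "rel_frob R p e I (I +> a) = \<zero>\<^bsub>R Quot (frob_pow R p e I)\<^esub>
      \<longleftrightarrow> (SOME b. b \<in> carrier R \<and> I +> a = I +> b) [^] (p ^ e) \<in> frob_pow R p e I"
    if "a \<in> carrier R" for a e
    unfolding rel_frob_def zeroQ
    by (rule coset_zero_iff[OF frob_pow_ideal[OF Ic]]) (use rep[OF that] in auto)
  show ?thesis
  proof (intro equalityI subsetI)
    fix \<eta> assume "\<eta> \<in> rel_frob_closure_zero_H0 R p m I"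
    then obtain a e where a: "a \<in> saturation R I m" and eta: "\<eta> = I +> a"
      and z: "rel_frob R p e I (I +> a) = \<zero>\<^bsub>R Quot (frob_pow R p e I)\<^esub>"
      unfolding rel_frob_closure_zero_H0_def H0_def by auto
    have ac: "a \<in> carrier R" using a satc by auto
    define b where "b = (SOME b. b \<in> carrier R \<and> I +> a = I +> b)"
    have bc: "b \<in> carrier R" and ab: "I +> a = I +> b" using rep[OF ac] unfolding b_def by auto
    have bq: "b [^] (p ^ e) \<in> frob_pow R p e I" using rf[OF ac] z unfolding b_def by simp
    have bF: "b \<in> frob_closure R p I" unfolding frob_closure_def using bc bq by auto
    have dI: "b \<ominus> a \<in> I" using diff[OF ac bc ab] .
    obtain n :: nat where an: "a \<in> ideal_colon R I (m [^]\<^bsub>ideals_set R\<^esub> n)"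
      using a unfolding saturation_def by auto
    have "b \<in> ideal_colon R I (m [^]\<^bsub>ideals_set R\<^esub> n)"
      unfolding ideal_colon_def
    proof (intro CollectI conjI ballI bc)
      fix j assume j: "j \<in> m [^]\<^bsub>ideals_set R\<^esub> n"
      have jc: "j \<in> carrier R" using j ideal_pow_sub[OF mI] by auto
      have dc: "b \<ominus> a \<in> carrier R" using dI Ic by auto
      have "b \<otimes> j = (a \<oplus> (b \<ominus> a)) \<otimes> j"
        using bsum[OF ac bc] by (rule arg_cong)
      also have "\<dots> = a \<otimes> j \<oplus> (b \<ominus> a) \<otimes> j" by (rule l_distr[OF ac dc jc])
      finally have bj: "b \<otimes> j = a \<otimes> j \<oplus> (b \<ominus> a) \<otimes> j" .
      moreover have "a \<otimes> j \<in> I" using an j unfolding ideal_colon_def by auto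
      moreover have "(b \<ominus> a) \<otimes> j \<in> I" using ideal.I_r_closed[OF I dI jc] .
      ultimately show "b \<otimes> j \<in> I"
        using additive_subgroup.a_closed[OF ideal.axioms(1)[OF I]] by simp
    qed
    then have "b \<in> saturation R I m" unfolding saturation_def by auto
    then show "\<eta> \<in> {I +> a | a. a \<in> frob_closure R p I \<inter> saturation R I m}"
      using bF eta ab by auto
  next
    fix \<eta> assume "\<eta> \<in> {I +> a | a. a \<in> frob_closure R p I \<inter> saturation R I m}"
    then obtain a where aF: "a \<in> frob_closure R p I" and a: "a \<in> saturation R I m"
      and eta: "\<eta> = I +> a" by auto
    have ac: "a \<in> carrier R" using a satc by auto
    obtain e where ae: "a [^] (p ^ e) \<in> frob_pow R p e I"
      using aF unfolding frob_closure_def by auto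
    define b where "b = (SOME b. b \<in> carrier R \<and> I +> a = I +> b)"
    have bc: "b \<in> carrier R" and ab: "I +> a = I +> b" using rep[OF ac] unfolding b_def by auto
    have dI: "b \<ominus> a \<in> I" using diff[OF ac bc ab] .
    have dc: "b \<ominus> a \<in> carrier R" using dI Ic by auto
    have "b [^] (p ^ e) = (a \<oplus> (b \<ominus> a)) [^] (p ^ e)"
      using bsum[OF ac bc] by (rule arg_cong)
    also have "\<dots> = a [^] (p ^ e) \<oplus> (b \<ominus> a) [^] (p ^ e)"
      by (rule frob_add_pow[OF pr p1 ac dc])
    finally have "b [^] (p ^ e) = a [^] (p ^ e) \<oplus> (b \<ominus> a) [^] (p ^ e)" .
    moreover have "(b \<ominus> a) [^] (p ^ e) \<in> frob_pow R p e I" by (rule frob_pow_mem[OF Ic dI])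
    ultimately have "b [^] (p ^ e) \<in> frob_pow R p e I"
      using ae additive_subgroup.a_closed[OF ideal.axioms(1)[OF frob_pow_ideal[OF Ic]]] by simp
    then have "rel_frob R p e I (I +> a) = \<zero>\<^bsub>R Quot (frob_pow R p e I)\<^esub>"
      using rf[OF ac] unfolding b_def by simp
    moreover have "\<eta> \<in> H0 R m I" unfolding H0_def using a eta by auto
    ultimately show "\<eta> \<in> rel_frob_closure_zero_H0 R p m I"
      unfolding rel_frob_closure_zero_H0_def using eta by auto
  qed
qed

end

theorem lemma2p9:
  fixes R :: "('a, 'b) ring_scheme" and m I :: "'a set" and p :: nat
  assumes "noetherian_ring R"
    and "local_ring R m"
    and "has_prime_char R p"
    and "ideal I R"
  shows "rel_frob_closure_zero_H0 R p m I
           = {I +>\<^bsub>R\<^esub> a | a. a \<in> frob_closure R p I \<inter> saturation R I m}"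
proof -
  have cr: "cring R" and mx: "maximalideal m R"
    using assms(2) unfolding local_ring_def by blast+
  have pr: "prime p" and p1: "add_pow R p \<one>\<^bsub>R\<^esub> = \<zero>\<^bsub>R\<^esub>"
    using assms(3) unfolding has_prime_char_def by blast+
  show ?thesis
    by (rule cring.main[OF cr pr p1 assms(4) maximalideal.axioms(1)[OF mx]])
qed

end
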